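(* Let $d\geq 2$ and let $\mathcal K$ be the class of all compact convex subsets of $\mathbb R^d$ with positive Lebesgue measure. For every $n\geq 1$, $$\mathcal R_n(\mathcal K):=\inf_{\hat G_n}\sup_{K\in\mathcal K}\mathbb E_K\big[|K\triangle\hat G_n|\big]=+\infty,$$ where the infimum is over all set estimators $\hat G_n$ based on a sample $X_1,\ldots,X_n$.
   Context: $|\cdot|$ is Lebesgue measure, $\triangle$ symmetric difference, and $\mathbb E_K$ is expectation when $X_1,\ldots,X_n$ are i.i.d. uniform on $K$. *)

theory Defs
  imports "HOL-Probability.Probability"
begin

definition convex_bodies :: "(real^'d) set set" where
  "convex_bodies = {K. compact K \<and> convex K \<and> emeasure lborel K > 0}"

definition sample_law :: "nat \<Rightarrow> (real^'d) set \<Rightarrow> (nat \<Rightarrow> real^'d) measure" where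
  "sample_law n K = PiM {..<n} (\<lambda>_. uniform_measure lborel K)"

text \<open>Set estimators based on n sample points: maps from samples to subsets of R^d
  whose graph is jointly Borel measurable (so that the risk is well defined).\<close>
definition set_estimators :: "nat \<Rightarrow> ((nat \<Rightarrow> real^'d) \<Rightarrow> (real^'d) set) set" where
  "set_estimators n = {G. {p. snd p \<in> G (fst p)} \<inter> space (PiM {..<n} (\<lambda>_. lborel) \<Otimes>\<^sub>M lborel)
       \<in> sets (PiM {..<n} (\<lambda>_. (lborel :: (real^'d) measure)) \<Otimes>\<^sub>M (lborel :: (real^'d) measure))}"

definition risk :: "nat \<Rightarrow> (real^'d) set \<Rightarrow> ((nat \<Rightarrow> real^'d) \<Rightarrow> (real^'d) set) \<Rightarrow> ennreal" where
  "risk n K G = (\<integral>\<^sup>+ x. emeasure lborel ((K - G x) \<union> (G x - K)) \<partial>sample_law n K)"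

end

theory Submission
  imports Defs
begin

lemma unif_PiM_restrict:
  fixes K1 K2 :: "'a::euclidean_space set" and I :: "'i set"
  assumes I: "finite I" and K: "K1 \<subseteq> K2" "K1 \<in> sets lborel" "K2 \<in> sets lborel"
    and pos: "emeasure lborel K1 > 0" and fin: "emeasure lborel K2 < \<infinity>"
  defines "E \<equiv> Pi\<^sub>E I (\<lambda>_. K1)"
  shows "uniform_measure (PiM I (\<lambda>_. uniform_measure lborel K2)) E = PiM I (\<lambda>_. uniform_measure lborel K1)"
    and "emeasure (PiM I (\<lambda>_. uniform_measure lborel K2)) E
          = ennreal ((measure lborel K1 / measure lborel K2) ^ card I)"
proof -
  let ?U1 = "uniform_measure lborel K1" and ?U2 = "uniform_measure lborel K2"
  have fin1: "emeasure lborel K1 < \<infinity>" using K fin by (metis emeasure_mono order.strict_trans1)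
  define b where "b = measure lborel K1"
  define B where "B = measure lborel K2"
  have eb: "emeasure lborel K1 = ennreal b" using fin1 by (simp add: b_def emeasure_eq_ennreal_measure)
  have eB: "emeasure lborel K2 = ennreal B" using fin by (simp add: B_def emeasure_eq_ennreal_measure)
  have bpos: "b > 0" using pos eb by simp
  have "emeasure lborel K1 \<le> emeasure lborel K2" using K by (intro emeasure_mono) auto
  then have Bpos: "B > 0" using pos eB eb bpos by (simp add: ennreal_le_iff2)
  have "prob_space ?U1" by (rule prob_space_uniform_measure) (use pos fin1 in auto)
  have "prob_space ?U2" by (rule prob_space_uniform_measure) (use pos Bpos eB in auto)
  interpret P1: product_sigma_finite "\<lambda>_. ?U1"
    unfolding product_sigma_finite_def using prob_space_imp_sigma_finite[OF \<open>prob_space ?U1\<close>] by simp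
  interpret P2: product_sigma_finite "\<lambda>_. ?U2"
    unfolding product_sigma_finite_def using prob_space_imp_sigma_finite[OF \<open>prob_space ?U2\<close>] by simp
  have fA: "measure lborel (K1 \<inter> A) \<ge> 0" for A by simp
  have U2: "emeasure ?U2 (K1 \<inter> A) = ennreal (measure lborel (K1 \<inter> A) / B)" if "A \<in> sets lborel" for A
  proof -
    have "emeasure ?U2 (K1 \<inter> A) = emeasure lborel (K1 \<inter> A) / emeasure lborel K2"
    proof -
      have e: "K2 \<inter> (K1 \<inter> A) = K1 \<inter> A" using K by auto
      have "K1 \<inter> A \<in> sets lborel" using that K by auto
      from emeasure_uniform_measure[OF K(3) this] show ?thesis unfolding e .
    qed
    also have "emeasure lborel (K1 \<inter> A) = ennreal (measure lborel (K1 \<inter> A))"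
      proof (rule emeasure_eq_ennreal_measure)
      have "emeasure lborel (K1 \<inter> A) \<le> emeasure lborel K1" by (rule emeasure_mono) (use that K in auto)
      then have "emeasure lborel (K1 \<inter> A) < \<infinity>" using fin1 by (rule order.strict_trans1)
      then show "emeasure lborel (K1 \<inter> A) \<noteq> \<top>" by simp
    qed
    finally show ?thesis using eB Bpos by (simp only: divide_ennreal[OF fA])
  qed
  have U1: "emeasure ?U1 A = ennreal (measure lborel (K1 \<inter> A) / b)" if "A \<in> sets lborel" for A
  proof -
    have "emeasure ?U1 A = emeasure lborel (K1 \<inter> A) / emeasure lborel K1"
      using emeasure_uniform_measure[OF K(2) that] .
    also have "emeasure lborel (K1 \<inter> A) = ennreal (measure lborel (K1 \<inter> A))"
      proof (rule emeasure_eq_ennreal_measure)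
      have "emeasure lborel (K1 \<inter> A) \<le> emeasure lborel K1" by (rule emeasure_mono) (use that K in auto)
      then have "emeasure lborel (K1 \<inter> A) < \<infinity>" using fin1 by (rule order.strict_trans1)
      then show "emeasure lborel (K1 \<inter> A) \<noteq> \<top>" by simp
    qed
    finally show ?thesis using eb bpos by (simp only: divide_ennreal[OF fA])
  qed
  have box: "emeasure (PiM I (\<lambda>_. ?U2)) (Pi\<^sub>E I (\<lambda>i. K1 \<inter> A i)) = ennreal (\<Prod>i\<in>I. measure lborel (K1 \<inter> A i) / B)"
    if "\<And>i. i \<in> I \<Longrightarrow> A i \<in> sets lborel" for A
  proof -
    have "emeasure (PiM I (\<lambda>_. ?U2)) (Pi\<^sub>E I (\<lambda>i. K1 \<inter> A i)) = (\<Prod>i\<in>I. emeasure ?U2 (K1 \<inter> A i))"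
      by (rule P2.emeasure_PiM) (use that K I in auto)
    also have "\<dots> = (\<Prod>i\<in>I. ennreal (measure lborel (K1 \<inter> A i) / B))"
      by (intro prod.cong refl U2 that)
    also have "\<dots> = ennreal (\<Prod>i\<in>I. measure lborel (K1 \<inter> A i) / B)"
      by (rule prod_ennreal) (use Bpos in simp)
    finally show ?thesis .
  qed
  have EE: "emeasure (PiM I (\<lambda>_. ?U2)) E = ennreal (\<Prod>i\<in>I. b / B)"
  proof -
    have "emeasure (PiM I (\<lambda>_. ?U2)) (Pi\<^sub>E I (\<lambda>i. K1 \<inter> K1)) = ennreal (\<Prod>i\<in>I. measure lborel (K1 \<inter> K1) / B)"
      by (rule box) (use K in simp)
    then show ?thesis unfolding Int_absorb E_def b_def .
  qed
  then show "emeasure (PiM I (\<lambda>_. ?U2)) E = ennreal ((b / B) ^ card I)" by (simp only: prod_constant)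
  show "uniform_measure (PiM I (\<lambda>_. ?U2)) E = PiM I (\<lambda>_. ?U1)"
  proof (rule P1.PiM_eqI[OF I])
    show "sets (uniform_measure (PiM I (\<lambda>_. ?U2)) E) = sets (PiM I (\<lambda>_. ?U1))"
      unfolding sets_uniform_measure by (rule sets_PiM_cong) simp_all
    fix A assume A: "\<And>i. i \<in> I \<Longrightarrow> A i \<in> sets ?U1"
    have A': "\<And>i. i \<in> I \<Longrightarrow> A i \<in> sets lborel" using A by simp
    have Es: "E \<in> sets (PiM I (\<lambda>_. ?U2))" unfolding E_def using K by (intro sets_PiM_I_finite I) auto
    have As: "Pi\<^sub>E I A \<in> sets (PiM I (\<lambda>_. ?U2))" using A' by (intro sets_PiM_I_finite I) auto
    have EA: "E \<inter> Pi\<^sub>E I A = Pi\<^sub>E I (\<lambda>i. K1 \<inter> A i)" unfolding E_def by (rule PiE_Int)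
    define x where "x i = measure lborel (K1 \<inter> A i)" for i
    have x0: "x i \<ge> 0" for i by (simp add: x_def)
    have "emeasure (uniform_measure (PiM I (\<lambda>_. ?U2)) E) (Pi\<^sub>E I A)
        = emeasure (PiM I (\<lambda>_. ?U2)) (Pi\<^sub>E I (\<lambda>i. K1 \<inter> A i)) / emeasure (PiM I (\<lambda>_. ?U2)) E"
      using emeasure_uniform_measure[OF Es As] unfolding EA .
    also have "\<dots> = ennreal (\<Prod>i\<in>I. x i / B) / ennreal (\<Prod>i\<in>I. b / B)"
      by (simp only: box[OF A'] EE x_def)
    also have "\<dots> = ennreal ((\<Prod>i\<in>I. x i / B) / (\<Prod>i\<in>I. b / B))"
      by (rule divide_ennreal) (use bpos Bpos x0 in \<open>auto intro!: prod_nonneg prod_pos\<close>)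
    also have "(\<Prod>i\<in>I. x i / B) / (\<Prod>i\<in>I. b / B) = (\<Prod>i\<in>I. x i / b)"
    proof -
      have pd: "(\<Prod>i\<in>I. x i / B) = (\<Prod>i\<in>I. x i / b) * (\<Prod>i\<in>I. b / B)"
        unfolding prod.distrib[symmetric] by (rule prod.cong) (use bpos in auto)
      have nz: "(\<Prod>i\<in>I. b / B) \<noteq> 0" using bpos Bpos I by simp
      show ?thesis unfolding pd using nz by simp
    qed
    also have "ennreal (\<Prod>i\<in>I. x i / b) = (\<Prod>i\<in>I. ennreal (x i / b))"
      by (rule prod_ennreal[symmetric]) (use bpos x0 in simp)
    also have "\<dots> = (\<Prod>i\<in>I. emeasure ?U1 (A i))"
      unfolding x_def by (intro prod.cong refl U1[symmetric] A')
    finally show "emeasure (uniform_measure (PiM I (\<lambda>_. ?U2)) E) (Pi\<^sub>E I A) = (\<Prod>i\<in>I. emeasure ?U1 (A i))" .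
  qed
qed

lemma integral_restrict_ge:
  fixes K1 K2 :: "'a::euclidean_space set" and I :: "'i set"
  assumes I: "finite I" and K: "K1 \<subseteq> K2" "K1 \<in> sets lborel" "K2 \<in> sets lborel"
    and pos: "emeasure lborel K1 > 0" and fin: "emeasure lborel K2 < \<infinity>"
    and f: "f \<in> borel_measurable (PiM I (\<lambda>_. lborel))"
  shows "ennreal ((measure lborel K1 / measure lborel K2) ^ card I) * (\<integral>\<^sup>+x. f x \<partial>PiM I (\<lambda>_. uniform_measure lborel K1))
     \<le> (\<integral>\<^sup>+x. f x \<partial>PiM I (\<lambda>_. uniform_measure lborel K2))"
proof -
  let ?P2 = "PiM I (\<lambda>_. uniform_measure lborel K2)"
  let ?E = "Pi\<^sub>E I (\<lambda>_. K1)"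
  note A = unif_PiM_restrict[OF I K pos fin]
  have fin1: "emeasure lborel K1 < \<infinity>" using K fin by (metis emeasure_mono order.strict_trans1)
  have sP: "sets ?P2 = sets (PiM I (\<lambda>_. lborel))" by (rule sets_PiM_cong) simp_all
  have f2: "f \<in> borel_measurable ?P2" using f measurable_cong_sets[OF sP refl] by simp
  have Es: "?E \<in> sets ?P2" using K by (intro sets_PiM_I_finite I) auto
  define c where "c = ennreal ((measure lborel K1 / measure lborel K2) ^ card I)"
  have b: "measure lborel K1 > 0" using pos fin1 by (simp add: emeasure_eq_ennreal_measure)
  have "emeasure lborel K1 \<le> emeasure lborel K2" using K by (intro emeasure_mono) auto
  then have "0 < emeasure lborel K2" using pos by (rule order.strict_trans2[rotated])
  then have B: "measure lborel K2 > 0" using fin by (simp add: emeasure_eq_ennreal_measure)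
  have c0: "c \<noteq> 0" unfolding c_def using b B by simp
  have ct: "c \<noteq> \<top>" unfolding c_def by simp
  have "(\<integral>\<^sup>+x. f x \<partial>PiM I (\<lambda>_. uniform_measure lborel K1)) = (\<integral>\<^sup>+x. f x \<partial>uniform_measure ?P2 ?E)"
    using A(1) by simp
  also have "\<dots> = (\<integral>\<^sup>+x. f x * indicator ?E x \<partial>?P2) / c"
    unfolding c_def A(2)[symmetric] by (rule nn_integral_uniform_measure[OF f2 Es])
  finally have eq: "c * (\<integral>\<^sup>+x. f x \<partial>PiM I (\<lambda>_. uniform_measure lborel K1)) = (\<integral>\<^sup>+x. f x * indicator ?E x \<partial>?P2)"
    using c0 ct by (simp add: ennreal_times_divide mult.commute[of c] ennreal_mult_divide_eq)
  also have "\<dots> \<le> (\<integral>\<^sup>+x. f x \<partial>?P2)"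
    by (intro nn_integral_mono) (simp split: split_indicator)
  finally show ?thesis unfolding c_def .
qed

lemma cube_measure:
  assumes "t \<ge> 0"
  shows "emeasure lborel (cbox (0::'a::euclidean_space) (t *\<^sub>R One)) = ennreal (t ^ DIM('a))"
  using assms by (simp add: emeasure_lborel_cbox_eq inner_sum_left inner_Basis prod_constant)

theorem theorem3:
  fixes n :: nat
  assumes "CARD('d::finite) \<ge> 2" and "n \<ge> 1"
  shows "(INF G \<in> set_estimators n. SUP K \<in> (convex_bodies :: (real^'d) set set). risk n K G) = \<infinity>"
proof -
  define I where "I = {..<n}"
  define D where "D = CARD('d)"
  have D1: "D \<ge> 1" using assms(1) unfolding D_def by simp
  let ?M = "PiM I (\<lambda>_. lborel :: (real^'d) measure)"
  have all: "(SUP K \<in> (convex_bodies :: (real^'d) set set). risk n K G) = \<infinity>" if G: "G \<in> set_estimators n" for G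
  proof -
    define S where "S = (SUP K \<in> (convex_bodies :: (real^'d) set set). risk n K G)"
    define S0 where "S0 = {p. snd p \<in> G (fst p)} \<inter> space (?M \<Otimes>\<^sub>M lborel)"
    have S0: "S0 \<in> sets (?M \<Otimes>\<^sub>M lborel)" using G unfolding S0_def set_estimators_def I_def by simp
    have Gm: "G x \<in> sets lborel" if "x \<in> space ?M" for x
    proof -
      have "Pair x -` S0 = G x" using that by (auto simp: S0_def space_pair_measure)
      with sets_Pair1[OF S0, of x] show ?thesis by simp
    qed
    have fm: "(\<lambda>x. emeasure lborel ((K - G x) \<union> (G x - K))) \<in> borel_measurable ?M" if K: "K \<in> sets lborel" for K
    proof -
      define Q where "Q = (S0 - space ?M \<times> K) \<union> (space ?M \<times> K - S0)"
      have Q: "Q \<in> sets (?M \<Otimes>\<^sub>M lborel)" unfolding Q_def using S0 K by (intro sets.Un sets.Diff pair_measureI) auto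
      have "\<And>x. x \<in> space ?M \<Longrightarrow> emeasure lborel (Pair x -` Q) = emeasure lborel ((K - G x) \<union> (G x - K))"
        by (rule arg_cong[where f="emeasure lborel"]) (auto simp: Q_def S0_def space_pair_measure)
      with lborel.measurable_emeasure_Pair[OF Q] show ?thesis by (simp cong: measurable_cong)
    qed
    have fmU: "(\<lambda>x. emeasure lborel ((K - G x) \<union> (G x - K))) \<in> borel_measurable (PiM I (\<lambda>_. uniform_measure lborel K'))"
      if K: "K \<in> sets lborel" for K K'
    proof -
      have sP: "sets (PiM I (\<lambda>_. uniform_measure lborel K')) = sets ?M" by (rule sets_PiM_cong) simp_all
      show ?thesis using fm[OF K] measurable_cong_sets[OF sP refl] by simp
    qed
    have riskI: "risk n K G = (\<integral>\<^sup>+x. emeasure lborel ((K - G x) \<union> (G x - K)) \<partial>PiM I (\<lambda>_. uniform_measure lborel K))" for K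
      unfolding risk_def sample_law_def I_def ..
    define c where "c = ((1/2::real) ^ D) ^ n"
    have cpos: "c > 0" unfolding c_def by simp
    have key: "ennreal c * ennreal t \<le> (ennreal c + 1) * S" if t: "t \<ge> 1" for t :: real
    proof -
      define K1 where "K1 = cbox (0::real^'d) (t *\<^sub>R One)"
      define K2 where "K2 = cbox (0::real^'d) ((2*t) *\<^sub>R One)"
      have m1: "emeasure lborel K1 = ennreal (t ^ D)" unfolding K1_def D_def using t cube_measure[of t] by simp
      have m2: "emeasure lborel K2 = ennreal ((2*t) ^ D)" unfolding K2_def D_def using t cube_measure[of "2*t"] by simp
      have K12: "K1 \<subseteq> K2" unfolding K1_def K2_def using t
        apply (auto simp: mem_box inner_sum_left inner_Basis)
        subgoal for x i by (drule bspec[of _ _ i]) auto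
        done
      have s1: "K1 \<in> sets lborel" "K2 \<in> sets lborel" unfolding K1_def K2_def by auto
      have pos1: "emeasure lborel K1 > 0" using m1 t by simp
      have pos2: "emeasure lborel K2 > 0" using m2 t by simp
      have fin2: "emeasure lborel K2 < \<infinity>" using m2 by simp
      have cb: "K1 \<in> (convex_bodies :: (real^'d) set set)" "K2 \<in> (convex_bodies :: (real^'d) set set)"
        unfolding convex_bodies_def using pos1 pos2 unfolding K1_def K2_def by auto
      have meas1: "measure lborel K1 = t ^ D" using m1 t by (intro measure_eq_emeasure_eq_ennreal) auto
      have meas2: "measure lborel K2 = (2*t) ^ D" using m2 t by (intro measure_eq_emeasure_eq_ennreal) auto
      have ratio: "(measure lborel K1 / measure lborel K2) ^ card I = c"
        unfolding meas1 meas2 c_def I_def using t by (simp add: power_divide power_one)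
      define f1 where "f1 x = emeasure lborel ((K1 - G x) \<union> (G x - K1))" for x
      define f2 where "f2 x = emeasure lborel ((K2 - G x) \<union> (G x - K2))" for x
      let ?P1 = "PiM I (\<lambda>_. uniform_measure lborel K1)"
      let ?P2 = "PiM I (\<lambda>_. uniform_measure lborel K2)"
      have f1m: "f1 \<in> borel_measurable ?P1" unfolding f1_def by (rule fmU[OF s1(1)])
      have f2m: "f2 \<in> borel_measurable ?P1" unfolding f2_def by (rule fmU[OF s1(2)])
      have f2M: "f2 \<in> borel_measurable ?M" unfolding f2_def by (rule fm[OF s1(2)])
      have fin1: "emeasure lborel K1 < \<infinity>" using m1 by simp
      have "prob_space (uniform_measure lborel K1)" by (rule prob_space_uniform_measure) (use pos1 fin1 in auto)
      then have pP1: "prob_space ?P1" by (intro prob_space_PiM)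
      have spP1: "space ?P1 = space ?M" by (simp add: space_PiM)
      define Dm where "Dm = emeasure lborel (K2 - K1)"
      have "Dm = (\<integral>\<^sup>+x. Dm \<partial>?P1)" using prob_space.emeasure_space_1[OF pP1] by simp
      also have "\<dots> \<le> (\<integral>\<^sup>+x. f1 x + f2 x \<partial>?P1)"
      proof (rule nn_integral_mono)
        fix x assume "x \<in> space ?P1"
        then have Gx: "G x \<in> sets lborel" using Gm spP1 by simp
        have "Dm \<le> emeasure lborel (((K1 - G x) \<union> (G x - K1)) \<union> ((K2 - G x) \<union> (G x - K2)))"
          unfolding Dm_def by (rule emeasure_mono) (use Gx s1 in auto)
        also have "\<dots> \<le> f1 x + f2 x" unfolding f1_def f2_def
          by (rule emeasure_subadditive) (use Gx s1 in auto)
        finally show "Dm \<le> f1 x + f2 x" .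
      qed
      also have "\<dots> = (\<integral>\<^sup>+x. f1 x \<partial>?P1) + (\<integral>\<^sup>+x. f2 x \<partial>?P1)"
        by (rule nn_integral_add[OF f1m f2m])
      also have "(\<integral>\<^sup>+x. f1 x \<partial>?P1) = risk n K1 G" unfolding riskI f1_def ..
      finally have h1: "Dm \<le> risk n K1 G + (\<integral>\<^sup>+x. f2 x \<partial>?P1)" .
      have fI: "finite I" by (simp add: I_def)
      have h2: "ennreal c * (\<integral>\<^sup>+x. f2 x \<partial>?P1) \<le> risk n K2 G"
        using integral_restrict_ge[OF fI K12 s1 pos1 fin2 f2M, unfolded ratio] unfolding riskI f2_def by simp
      have r1: "risk n K1 G \<le> S" unfolding S_def by (rule SUP_upper[OF cb(1)])
      have r2: "risk n K2 G \<le> S" unfolding S_def by (rule SUP_upper[OF cb(2)])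
      have "ennreal c * Dm \<le> ennreal c * (risk n K1 G + (\<integral>\<^sup>+x. f2 x \<partial>?P1))"
        by (rule mult_left_mono[OF h1]) simp
      also have "\<dots> = ennreal c * risk n K1 G + ennreal c * (\<integral>\<^sup>+x. f2 x \<partial>?P1)"
        by (simp add: distrib_left)
      also have "\<dots> \<le> ennreal c * S + S"
        by (intro add_mono mult_left_mono r1 order.trans[OF h2 r2]) simp
      also have "\<dots> = (ennreal c + 1) * S" by (simp add: distrib_right)
      finally have h3: "ennreal c * Dm \<le> (ennreal c + 1) * S" .
      have "Dm = emeasure lborel K2 - emeasure lborel K1"
        unfolding Dm_def using s1 K12 fin1 by (intro emeasure_Diff) auto
      also have "\<dots> = ennreal ((2*t)^D - t^D)" unfolding m1 m2 using t by (simp add: ennreal_minus)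
      finally have Dmv: "Dm = ennreal ((2*t)^D - t^D)" .
      have "t \<le> t ^ D" using power_increasing[OF D1, of t] t by simp
      moreover have "(2*t)^D = 2^D * t^D" by (simp add: power_mult_distrib)
      moreover have "(2::real)^D \<ge> 2" using power_increasing[OF D1, of "2::real"] by simp
      moreover have "t ^ D \<ge> 0" using t by simp
      ultimately have "t \<le> (2*t)^D - t^D"
        using mult_right_mono[of 2 "(2::real)^D" "t^D"] by linarith
      then have "ennreal t \<le> Dm" unfolding Dmv by (rule ennreal_leI)
      then have "ennreal c * ennreal t \<le> ennreal c * Dm" by (rule mult_left_mono) simp
      then show ?thesis using h3 by (rule order.trans)
    qed
    show ?thesis
    proof (rule ccontr)
      assume "(SUP K \<in> (convex_bodies :: (real^'d) set set). risk n K G) \<noteq> \<infinity>"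
      then have "S \<noteq> \<top>" unfolding S_def by simp
      then obtain s where s: "S = ennreal s" "s \<ge> 0" by (cases S) auto
      define t where "t = max 1 ((c + 1) * s / c + 1)"
      have "ennreal c * ennreal t \<le> (ennreal c + 1) * S" by (rule key) (simp add: t_def)
      moreover have "ennreal c * ennreal t = ennreal (c * t)"
        using cpos by (intro ennreal_mult[symmetric]) (auto simp: t_def)
      moreover have "(ennreal c + 1) * S = ennreal ((c + 1) * s)"
      proof -
        have "ennreal c + 1 = ennreal (c + 1)" using cpos by (simp add: ennreal_plus)
        then show ?thesis using cpos s by (simp add: ennreal_mult)
      qed
      ultimately have "ennreal (c * t) \<le> ennreal ((c + 1) * s)" by simp
      then have "c * t \<le> (c + 1) * s" using cpos s by (subst (asm) ennreal_le_iff) auto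
      moreover have "c * t \<ge> c * ((c + 1) * s / c + 1)" unfolding t_def using cpos by (intro mult_left_mono) auto
      moreover have "c * ((c + 1) * s / c + 1) = (c + 1) * s + c" using cpos by (simp add: field_simps)
      ultimately show False using cpos by linarith
    qed
  qed
  then show ?thesis by (simp add: INF_top_conv)
qed

end
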